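(* Let $G$ be a finite connected graph and let $B\subseteq V(G)$ be a separator (i.e. $G-B$ is disconnected) such that the induced subgraph $G[B]$ has diameter $k$. Let $C_1,\dots,C_m$ be the connected components of $G-B$ and let $G_i=G[V(C_i)\cup B]$. Let $\hat\delta_i$ be the four-points hyperbolic curvature of $G_i$. Then the four-points hyperbolic curvature of $G$ is at most $k+\max_i\hat\delta_i$.
   Context: For a connected graph $H$ with graph distance $d$, the four-points hyperbolic curvature of $H$ is the smallest $\hat\delta\ge0$ such that for all vertices $a,b,c,d'$ of $H$, $d(a,b)+d(c,d')\le\max\{d(a,c)+d(b,d'),\ d(a,d')+d(b,c)\}+2\hat\delta$. Each $G_i$ is considered with its own graph distance. *)

theory Defs
  imports Complex_Main
begin

text \<open>Simple graphs are given by a vertex set V and a symmetric irreflexive edge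
relation E. Induced subgraphs G[S] are represented by restricting walks to S.\<close>

definition walk_in :: "'a set \<Rightarrow> ('a \<Rightarrow> 'a \<Rightarrow> bool) \<Rightarrow> 'a list \<Rightarrow> bool" where
  "walk_in S E xs \<longleftrightarrow> xs \<noteq> [] \<and> set xs \<subseteq> S \<and>
     (\<forall>i. Suc i < length xs \<longrightarrow> E (xs ! i) (xs ! Suc i))"

definition reachable_in :: "'a set \<Rightarrow> ('a \<Rightarrow> 'a \<Rightarrow> bool) \<Rightarrow> 'a \<Rightarrow> 'a \<Rightarrow> bool" where
  "reachable_in S E u v \<longleftrightarrow> (\<exists>xs. walk_in S E xs \<and> hd xs = u \<and> last xs = v)"

definition connected_in :: "'a set \<Rightarrow> ('a \<Rightarrow> 'a \<Rightarrow> bool) \<Rightarrow> bool" where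
  "connected_in S E \<longleftrightarrow> S \<noteq> {} \<and> (\<forall>u\<in>S. \<forall>v\<in>S. reachable_in S E u v)"

definition gdist :: "'a set \<Rightarrow> ('a \<Rightarrow> 'a \<Rightarrow> bool) \<Rightarrow> 'a \<Rightarrow> 'a \<Rightarrow> nat" where
  "gdist S E u v = (LEAST n. \<exists>xs. walk_in S E xs \<and> hd xs = u \<and> last xs = v \<and> length xs = Suc n)"

definition diameter :: "'a set \<Rightarrow> ('a \<Rightarrow> 'a \<Rightarrow> bool) \<Rightarrow> nat" where
  "diameter S E = Max {gdist S E u v | u v. u \<in> S \<and> v \<in> S}"

definition component_of :: "'a set \<Rightarrow> ('a \<Rightarrow> 'a \<Rightarrow> bool) \<Rightarrow> 'a set \<Rightarrow> bool" where
  "component_of S E C \<longleftrightarrow> C \<subseteq> S \<and> connected_in C E \<and>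
     (\<forall>u\<in>C. \<forall>v\<in>S. reachable_in S E u v \<longrightarrow> v \<in> C)"

definition four_point_cond :: "'a set \<Rightarrow> ('a \<Rightarrow> 'a \<Rightarrow> bool) \<Rightarrow> real \<Rightarrow> bool" where
  "four_point_cond S E \<delta> \<longleftrightarrow> 0 \<le> \<delta> \<and> (\<forall>a\<in>S. \<forall>b\<in>S. \<forall>c\<in>S. \<forall>d\<in>S.
     real (gdist S E a b) + real (gdist S E c d)
       \<le> max (real (gdist S E a c) + real (gdist S E b d))
              (real (gdist S E a d) + real (gdist S E b c)) + 2 * \<delta>)"

definition hyp_curv :: "'a set \<Rightarrow> ('a \<Rightarrow> 'a \<Rightarrow> bool) \<Rightarrow> real" where
  "hyp_curv S E = (LEAST \<delta>. four_point_cond S E \<delta>)"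

end

theory Submission
  imports Defs
begin


lemma walk_single: "x \<in> S \<Longrightarrow> walk_in S E [x]"
  by (simp add: walk_in_def)

lemma walk_mono: "walk_in S E xs \<Longrightarrow> set xs \<subseteq> T \<Longrightarrow> walk_in T E xs"
  by (simp add: walk_in_def)

lemma walk_take:
  assumes "walk_in S E xs" "j < length xs"
  shows "walk_in S E (take (Suc j) xs) \<and> hd (take (Suc j) xs) = hd xs \<and>
         last (take (Suc j) xs) = xs ! j \<and> length (take (Suc j) xs) = Suc j"
proof -
  have ne: "xs \<noteq> []" using assms by (simp add: walk_in_def)
  have "walk_in S E (take (Suc j) xs)"
    using assms unfolding walk_in_def by (auto dest: in_set_takeD)
  moreover have "hd (take (Suc j) xs) = hd xs" using ne by (cases xs) auto
  moreover have "last (take (Suc j) xs) = xs ! j"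
    using assms ne by (subst last_conv_nth) (auto simp: min_def intro: arg_cong[where f="(!) xs"])
  ultimately show ?thesis using assms by simp
qed

lemma walk_drop:
  assumes "walk_in S E xs" "j < length xs"
  shows "walk_in S E (drop j xs) \<and> hd (drop j xs) = xs ! j \<and>
         last (drop j xs) = last xs \<and> length (drop j xs) = length xs - j"
proof -
  have "walk_in S E (drop j xs)"
    using assms unfolding walk_in_def by (auto dest: in_set_dropD)
  moreover have "hd (drop j xs) = xs ! j" using assms by (simp add: hd_drop_conv_nth)
  moreover have "last (drop j xs) = last xs" using assms by simp
  ultimately show ?thesis by simp
qed

lemma walk_append:
  assumes "walk_in S E xs" "walk_in S E ys" "last xs = hd ys"
  shows "walk_in S E (xs @ tl ys) \<and> hd (xs @ tl ys) = hd xs \<and> last (xs @ tl ys) = last ys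
     \<and> length (xs @ tl ys) = length xs + length ys - 1"
proof -
  have ne: "xs \<noteq> []" "ys \<noteq> []" using assms by (auto simp: walk_in_def)
  have st: "set (xs @ tl ys) \<subseteq> S" using assms ne by (auto simp: walk_in_def dest: list.set_sel(2))
  have ed: "E ((xs @ tl ys) ! i) ((xs @ tl ys) ! Suc i)" if "Suc i < length (xs @ tl ys)" for i
  proof -
    consider "Suc i < length xs" | "Suc i = length xs" | "Suc i > length xs" by linarith
    then show ?thesis
    proof cases
      case 1 then show ?thesis using assms(1) by (simp add: nth_append walk_in_def)
    next
      case 2
      have "xs ! i = last xs" by (metis 2 diff_Suc_1 last_conv_nth ne(1))
      also have "\<dots> = ys ! 0" using assms(3) ne by (simp add: hd_conv_nth)
      finally have a: "(xs @ tl ys) ! i = ys ! 0" using 2 by (simp add: nth_append)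
      have b: "(xs @ tl ys) ! Suc i = ys ! 1" using 2 ne by (cases ys) (auto simp: nth_append)
      have "1 < length ys" using that 2 by simp
      then show ?thesis using a b assms(2) unfolding walk_in_def by (metis One_nat_def)
    next
      case 3
      then obtain m where m: "i = length xs + m" by (metis less_Suc_eq_le le_iff_add)
      have "Suc (Suc m) < length ys" using that m by simp
      then have "E (ys ! Suc m) (ys ! Suc (Suc m))" using assms(2) by (simp add: walk_in_def)
      then show ?thesis using m ne by (cases ys) (auto simp: nth_append)
    qed
  qed
  have l: "last (xs @ tl ys) = last ys"
    using ne assms(3) by (cases ys) (auto)
  have "length (xs @ tl ys) = length xs + length ys - 1" using ne by (cases ys) auto
  then show ?thesis using st ed ne l by (auto simp: walk_in_def)
qed

lemma walk_rev:
  assumes "walk_in S E xs" "\<And>u v. E u v \<Longrightarrow> E v u"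
  shows "walk_in S E (rev xs)"
proof -
  have "E (rev xs ! i) (rev xs ! Suc i)" if "Suc i < length xs" for i
  proof -
    have "E (xs ! (length xs - Suc (Suc i))) (xs ! Suc (length xs - Suc (Suc i)))"
      using assms(1) that unfolding walk_in_def by (metis Suc_diff_Suc diff_less lessI less_trans zero_less_Suc)
    moreover have "Suc (length xs - Suc (Suc i)) = length xs - Suc i" using that by simp
    ultimately show ?thesis using assms(2) that by (simp add: rev_nth)
  qed
  then show ?thesis using assms(1) by (auto simp: walk_in_def)
qed

lemma gdist_le:
  assumes "walk_in S E xs" "hd xs = u" "last xs = v"
  shows "gdist S E u v \<le> length xs - 1"
proof -
  have "xs \<noteq> []" using assms by (simp add: walk_in_def)
  then have "length xs = Suc (length xs - 1)" by simp
  then show ?thesis unfolding gdist_def using assms by (intro Least_le) blast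
qed

lemma gdist_ex:
  assumes "reachable_in S E u v"
  shows "\<exists>xs. walk_in S E xs \<and> hd xs = u \<and> last xs = v \<and> length xs = Suc (gdist S E u v)"
proof -
  obtain xs where xs: "walk_in S E xs" "hd xs = u" "last xs = v"
    using assms by (auto simp: reachable_in_def)
  then have "xs \<noteq> []" by (simp add: walk_in_def)
  then have "\<exists>n xs. walk_in S E xs \<and> hd xs = u \<and> last xs = v \<and> length xs = Suc n"
    using xs by (intro exI[of _ "length xs - 1"]) auto
  then show ?thesis unfolding gdist_def by (rule LeastI_ex)
qed

lemma reach_walk: "walk_in S E xs \<Longrightarrow> reachable_in S E (hd xs) (last xs)"
  by (auto simp: reachable_in_def)

lemma reach_refl: "u \<in> S \<Longrightarrow> reachable_in S E u u"
  using walk_single[of u S E] by (auto simp: reachable_in_def)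

lemma reach_trans:
  assumes "reachable_in S E u v" "reachable_in S E v w" shows "reachable_in S E u w"
proof -
  obtain xs ys where "walk_in S E xs" "hd xs = u" "last xs = v" "walk_in S E ys" "hd ys = v" "last ys = w"
    using assms by (auto simp: reachable_in_def)
  then show ?thesis using walk_append[of S E xs ys] unfolding reachable_in_def by metis
qed

lemma reach_sym:
  assumes "reachable_in S E u v" "\<And>u v. E u v \<Longrightarrow> E v u" shows "reachable_in S E v u"
proof -
  obtain xs where xs: "walk_in S E xs" "hd xs = u" "last xs = v"
    using assms by (auto simp: reachable_in_def)
  then have "xs \<noteq> []" by (simp add: walk_in_def)
  then show ?thesis using xs walk_rev[OF xs(1) assms(2)] unfolding reachable_in_def
    by (metis hd_rev last_rev)
qed

lemma reach_mono: "reachable_in S E u v \<Longrightarrow> S \<subseteq> T \<Longrightarrow> reachable_in T E u v"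
  unfolding reachable_in_def walk_in_def by blast

lemma gdist_tri:
  assumes "reachable_in S E u v" "reachable_in S E v w"
  shows "gdist S E u w \<le> gdist S E u v + gdist S E v w"
proof -
  obtain xs ys where "walk_in S E xs" "hd xs = u" "last xs = v" "length xs = Suc (gdist S E u v)"
     "walk_in S E ys" "hd ys = v" "last ys = w" "length ys = Suc (gdist S E v w)"
    using gdist_ex[OF assms(1)] gdist_ex[OF assms(2)] by blast
  then show ?thesis using walk_append[of S E xs ys] gdist_le[of S E "xs @ tl ys" u w] by auto
qed

lemma gdist_sym:
  assumes "reachable_in S E u v" "\<And>u v. E u v \<Longrightarrow> E v u"
  shows "gdist S E v u = gdist S E u v"
proof -
  have *: "gdist S E y x \<le> gdist S E x y" if rxy: "reachable_in S E x y" for x y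
  proof -
    obtain xs where xs: "walk_in S E xs" "hd xs = x" "last xs = y" "length xs = Suc (gdist S E x y)"
      using gdist_ex[OF rxy] by blast
    then have "xs \<noteq> []" by (simp add: walk_in_def)
    then show ?thesis using gdist_le[OF walk_rev[OF xs(1) assms(2)], of y x] xs by (simp add: hd_rev last_rev)
  qed
  show ?thesis using *[OF assms(1)] *[OF reach_sym[OF assms]] by simp
qed

lemma gdist_mono:
  assumes "reachable_in S E u v" "S \<subseteq> T"
  shows "gdist T E u v \<le> gdist S E u v"
proof -
  obtain xs where xs: "walk_in S E xs" "hd xs = u" "last xs = v" "length xs = Suc (gdist S E u v)"
    using gdist_ex[OF assms(1)] by blast
  have "walk_in T E xs" using xs(1) assms(2) by (auto simp: walk_in_def)
  then show ?thesis using gdist_le[of T E xs u v] xs by simp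
qed

lemma gdist_refl: "u \<in> S \<Longrightarrow> gdist S E u u = 0"
  using gdist_le[OF walk_single[of u S E]] by simp




lemma fpc_mono: "four_point_cond S E d1 \<Longrightarrow> d1 \<le> d2 \<Longrightarrow> four_point_cond S E d2"
  unfolding four_point_cond_def by (smt (verit, best))

lemma hyp_curv_props:
  assumes "finite S"
  shows "four_point_cond S E (hyp_curv S E) \<and> (\<forall>\<delta>. four_point_cond S E \<delta> \<longrightarrow> hyp_curv S E \<le> \<delta>)"
proof -
  define f where "f = (\<lambda>(a,b,c,d). (real (gdist S E a b) + real (gdist S E c d)
       - max (real (gdist S E a c) + real (gdist S E b d))
              (real (gdist S E a d) + real (gdist S E b c))) / 2)"
  define m where "m = Max (insert 0 (f ` (S \<times> S \<times> S \<times> S)))"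
  have fin: "finite (insert 0 (f ` (S \<times> S \<times> S \<times> S)))" using assms by simp
  have iff: "four_point_cond S E \<delta> \<longleftrightarrow> m \<le> \<delta>" for \<delta>
  proof
    assume h: "four_point_cond S E \<delta>"
    have "\<forall>x \<in> insert 0 (f ` (S \<times> S \<times> S \<times> S)). x \<le> \<delta>"
      using h unfolding four_point_cond_def f_def by (force simp: field_simps)
    then show "m \<le> \<delta>" unfolding m_def using fin by (simp add: Max_le_iff)
  next
    assume h: "m \<le> \<delta>"
    have "x \<le> m" if "x \<in> insert 0 (f ` (S \<times> S \<times> S \<times> S))" for x
      unfolding m_def using fin that by simp
    then have xm: "\<And>x. x \<in> insert 0 (f ` (S \<times> S \<times> S \<times> S)) \<Longrightarrow> x \<le> \<delta>" using h order_trans by blast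
    have "0 \<le> \<delta>" using xm by simp
    moreover have "\<forall>a\<in>S. \<forall>b\<in>S. \<forall>c\<in>S. \<forall>d\<in>S. f (a,b,c,d) \<le> \<delta>"
      using xm by (meson SigmaI image_eqI insertCI)
    ultimately show "four_point_cond S E \<delta>" unfolding four_point_cond_def f_def
      by (auto simp: field_simps)
  qed
  have "hyp_curv S E = m" unfolding hyp_curv_def
    by (rule Least_equality) (auto simp: iff)
  then show ?thesis using iff by auto
qed




lemma maxI: "(s::real) \<le> m + x \<or> s \<le> l + x \<Longrightarrow> s \<le> max m l + x" by auto

locale sg =
  fixes V B :: "'a set" and E :: "'a \<Rightarrow> 'a \<Rightarrow> bool" and k :: nat
  assumes finV: "finite V" and symE: "\<And>u v. E u v \<Longrightarrow> E v u"
    and connV: "connected_in V E" and BV: "B \<subseteq> V" and connB: "connected_in B E"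
    and diam: "diameter B E = k"
begin

abbreviation d where "d x y \<equiv> gdist V E x y"
definition r where "r x = Min ((\<lambda>p. gdist V E x p) ` B)"
definition ns where "ns x y \<longleftrightarrow> x \<notin> B \<and> y \<notin> B \<and> reachable_in (V - B) E x y"
definition Cof where "Cof x = {y \<in> V - B. reachable_in (V - B) E x y}"
abbreviation comp where "comp C \<equiv> component_of (V - B) E C"

lemma reachV: "x \<in> V \<Longrightarrow> y \<in> V \<Longrightarrow> reachable_in V E x y"
  using connV by (simp add: connected_in_def)

lemma finB: "finite B" using finV BV finite_subset by blast
lemma Bne: "B \<noteq> {}" using connB by (simp add: connected_in_def)

lemma dB_k: "p \<in> B \<Longrightarrow> q \<in> B \<Longrightarrow> gdist B E p q \<le> k"
proof -
  assume pq: "p \<in> B" "q \<in> B"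
  have eq: "{gdist B E u v | u v. u \<in> B \<and> v \<in> B} = (\<lambda>x. gdist B E (fst x) (snd x)) ` (B \<times> B)"
    by force
  have "finite {gdist B E u v | u v. u \<in> B \<and> v \<in> B}" unfolding eq using finB by simp
  moreover have "gdist B E p q \<in> {gdist B E u v | u v. u \<in> B \<and> v \<in> B}" using pq by blast
  ultimately have "gdist B E p q \<le> Max {gdist B E u v | u v. u \<in> B \<and> v \<in> B}" by (rule Max_ge)
  then show ?thesis using diam unfolding diameter_def by simp
qed

lemma r_le: "p \<in> B \<Longrightarrow> r x \<le> d x p"
  unfolding r_def using finB by simp

lemma r_ex: "\<exists>p\<in>B. d x p = r x"
proof -
  have "r x \<in> (\<lambda>p. gdist V E x p) ` B" unfolding r_def using finB Bne by (intro Min_in) auto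
  then show ?thesis by auto
qed

lemma r_B: "p \<in> B \<Longrightarrow> r p = 0"
  using r_le[of p p] gdist_refl[of p V E] BV by auto

lemma geo: "x \<in> V \<Longrightarrow> y \<in> V \<Longrightarrow> \<exists>xs. walk_in V E xs \<and> hd xs = x \<and> last xs = y \<and> length xs = Suc (d x y)"
  using gdist_ex[OF reachV] by blast

lemma dsym: "x \<in> V \<Longrightarrow> y \<in> V \<Longrightarrow> d y x = d x y"
  using gdist_sym[OF reachV symE] by blast

lemma dtri: "x \<in> V \<Longrightarrow> y \<in> V \<Longrightarrow> z \<in> V \<Longrightarrow> d x z \<le> d x y + d y z"
  using gdist_tri[OF reachV reachV] by blast

lemma dpq_k: "p \<in> B \<Longrightarrow> q \<in> B \<Longrightarrow> d p q \<le> k"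
proof -
  assume pq: "p \<in> B" "q \<in> B"
  have "reachable_in B E p q" using connB pq by (simp add: connected_in_def)
  then have "d p q \<le> gdist B E p q" using BV by (rule gdist_mono)
  then show ?thesis using dB_k[OF pq] by simp
qed

lemma walk_B:
  assumes "walk_in V E xs" "hd xs = x" "last xs = y" "j < length xs" "xs ! j \<in> B"
  shows "r x + r y \<le> length xs - 1"
proof -
  note t = walk_take[OF assms(1,4)] and dr = walk_drop[OF assms(1,4)]
  have 1: "d x (xs ! j) \<le> j" using gdist_le[of V E "take (Suc j) xs" x "xs ! j"] t assms(2) by auto
  have 2: "d (xs ! j) y \<le> length xs - j - 1" using gdist_le[of V E "drop j xs" "xs ! j" y] dr assms(3) by auto
  have "reachable_in V E (xs ! j) y" using reach_walk[of V E "drop j xs"] dr assms by simp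
  then have 3: "d y (xs ! j) = d (xs ! j) y" by (rule gdist_sym[OF _ symE])
  have "r x \<le> d x (xs ! j)" "r y \<le> d y (xs ! j)" using r_le assms(5) by auto
  then show ?thesis using 1 2 3 assms(4) by linarith
qed

lemma walk_noB: "walk_in V E xs \<Longrightarrow> \<forall>i<length xs. xs ! i \<notin> B \<Longrightarrow> walk_in (V - B) E xs"
  unfolding walk_in_def by (auto simp: in_set_conv_nth)

lemma sepd: assumes "x \<in> V" "y \<in> V" "\<not> ns x y" shows "r x + r y \<le> d x y"
proof -
  obtain xs where xs: "walk_in V E xs" "hd xs = x" "last xs = y" "length xs = Suc (d x y)"
    using geo assms by blast
  have ne: "xs \<noteq> []" using xs by (simp add: walk_in_def)
  have "\<exists>j<length xs. xs ! j \<in> B"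
  proof (rule ccontr)
    assume nb: "\<not> ?thesis"
    then have "walk_in (V - B) E xs" using walk_noB xs by blast
    then have "reachable_in (V - B) E x y" using reach_walk xs by blast
    moreover have "x \<notin> B" using nb xs ne by (metis hd_conv_nth length_greater_0_conv)
    moreover have "y \<notin> B" using nb xs ne by (metis last_conv_nth diff_less length_greater_0_conv zero_less_one)
    ultimately show False using assms(3) by (simp add: ns_def)
  qed
  then obtain j where "j < length xs" "xs ! j \<in> B" by blast
  then show ?thesis using walk_B[OF xs(1-3)] xs(4) by fastforce
qed

lemma dupper: assumes "x \<in> V" "y \<in> V" shows "d x y \<le> r x + r y + k"
proof -
  obtain p q where p: "p \<in> B" "d x p = r x" and q: "q \<in> B" "d y q = r y" using r_ex by blast
  have pq: "p \<in> V" "q \<in> V" using p q BV by auto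
  have "d x y \<le> d x p + d p y" using dtri assms pq by blast
  also have "d p y \<le> d p q + d q y" using dtri assms pq by blast
  also have "d q y = r y" using q dsym assms pq by metis
  finally show ?thesis using p dpq_k[OF p(1) q(1)] by linarith
qed

lemma reach_nth: "walk_in S E xs \<Longrightarrow> i < length xs \<Longrightarrow> reachable_in S E (hd xs) (xs ! i)"
  using walk_take[of S E xs i] reach_walk by metis

lemma comp_closed:
  assumes "comp C" "x \<in> C" "walk_in (V - B) E xs" "hd xs = x"
  shows "set xs \<subseteq> C"
proof
  fix w assume "w \<in> set xs"
  then obtain i where i: "i < length xs" "xs ! i = w" by (auto simp: in_set_conv_nth)
  then have "reachable_in (V - B) E x w" using reach_nth assms by metis
  moreover have "w \<in> V - B" using assms(3) i nth_mem unfolding walk_in_def by blast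
  ultimately show "w \<in> C" using assms(1,2) by (auto simp: component_of_def)
qed

lemma compV: "comp C \<Longrightarrow> C \<subseteq> V - B" by (simp add: component_of_def)

lemma Lstar:
  assumes "comp C" "x \<in> C \<union> B" "y \<in> C \<union> B"
  shows "gdist (C \<union> B) E x y = d x y \<or> r x + r y \<le> d x y"
proof -
  have V: "x \<in> V" "y \<in> V" "C \<union> B \<subseteq> V" using assms compV BV by auto
  obtain xs where xs: "walk_in V E xs" "hd xs = x" "last xs = y" "length xs = Suc (d x y)"
    using geo V by blast
  have ne: "xs \<noteq> []" using xs by (simp add: walk_in_def)
  show ?thesis
  proof (cases "set xs \<subseteq> C \<union> B")
    case True
    then have w: "walk_in (C \<union> B) E xs" using walk_mono xs by blast
    then have "gdist (C \<union> B) E x y \<le> d x y" using gdist_le xs by fastforce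
    moreover have "d x y \<le> gdist (C \<union> B) E x y" using gdist_mono[OF _ V(3)] reach_walk[OF w] xs by metis
    ultimately show ?thesis by simp
  next
    case False
    have "\<exists>j<length xs. xs ! j \<in> B"
    proof (rule ccontr)
      assume nb: "\<not> ?thesis"
      then have w: "walk_in (V - B) E xs" using walk_noB xs by blast
      have "x \<notin> B" using nb xs ne by (metis hd_conv_nth length_greater_0_conv)
      then have "x \<in> C" using assms by auto
      then have "set xs \<subseteq> C" using comp_closed[OF assms(1) _ w] xs by blast
      then show False using False by blast
    qed
    then obtain j where "j < length xs" "xs ! j \<in> B" by blast
    then show ?thesis using walk_B[OF xs(1-3)] xs(4) by fastforce
  qed
qed

lemma K5:
  assumes "comp C" "x \<in> C \<union> B" "p \<in> B" "d x p = r x"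
  shows "gdist (C \<union> B) E x p = r x \<and> reachable_in (C \<union> B) E x p"
proof -
  have V: "x \<in> V" "p \<in> V" "C \<union> B \<subseteq> V" using assms compV BV by auto
  obtain xs where xs: "walk_in V E xs" "hd xs = x" "last xs = p" "length xs = Suc (r x)"
    using geo V assms(4) by metis
  have ne: "xs \<noteq> []" using xs by (simp add: walk_in_def)
  have nB: "xs ! i \<notin> B" if "i < length xs - 1" for i
  proof
    assume "xs ! i \<in> B"
    have "d x (xs ! i) \<le> i"
      using gdist_le[of V E "take (Suc i) xs" x "xs ! i"] walk_take[OF xs(1), of i] that xs by auto
    then show False using r_le[OF \<open>xs ! i \<in> B\<close>, of x] that xs(4) by linarith
  qed
  have sub: "set xs \<subseteq> C \<union> B"
  proof
    fix w assume "w \<in> set xs"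
    then obtain i where i: "i < length xs" "xs ! i = w" by (auto simp: in_set_conv_nth)
    show "w \<in> C \<union> B"
    proof (cases "i = length xs - 1")
      case True then show ?thesis using i xs assms(3) ne by (simp add: last_conv_nth)
    next
      case False
      then have il: "i < length xs - 1" using i by simp
      define ys where "ys = take (Suc i) xs"
      have ys: "walk_in V E ys" "hd ys = x" "last ys = w" "length ys = Suc i"
        using walk_take[OF xs(1) i(1)] xs i unfolding ys_def by auto
      have "\<forall>j<length ys. ys ! j \<notin> B" using nB il ys(4) unfolding ys_def by auto
      then have wy: "walk_in (V - B) E ys" using walk_noB ys by blast
      have "x \<notin> B" using nB[of 0] il xs ne by (simp add: hd_conv_nth)
      then have "x \<in> C" using assms(2) by auto
      then have "set ys \<subseteq> C" using comp_closed[OF assms(1) _ wy] ys by blast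
      moreover have "w \<in> set ys" using ys by (metis last_in_set walk_in_def)
      ultimately show ?thesis by auto
    qed
  qed
  then have w: "walk_in (C \<union> B) E xs" using walk_mono xs by blast
  then have "gdist (C \<union> B) E x p \<le> r x" using gdist_le xs by fastforce
  moreover have "d x p \<le> gdist (C \<union> B) E x p" using gdist_mono[OF _ V(3)] reach_walk[OF w] xs by metis
  ultimately show ?thesis using assms(4) reach_walk[OF w] xs by simp
qed

lemma reachCB:
  assumes "comp C" "x \<in> C \<union> B" "y \<in> C \<union> B"
  shows "reachable_in (C \<union> B) E x y"
proof -
  obtain p q where p: "p \<in> B" "d x p = r x" and q: "q \<in> B" "d y q = r y" using r_ex by blast
  have 1: "reachable_in (C \<union> B) E x p" using K5[OF assms(1) assms(2) p] by blast
  have 2: "reachable_in (C \<union> B) E y q" using K5[OF assms(1) assms(3) q] by blast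
  have "reachable_in B E p q" using connB p q by (simp add: connected_in_def)
  then have 3: "reachable_in (C \<union> B) E p q" by (rule reach_mono) blast
  show ?thesis using reach_trans[OF reach_trans[OF 1 3] reach_sym[OF 2 symE]] .
qed

lemma CBV: "comp C \<Longrightarrow> C \<union> B \<subseteq> V" using compV BV by blast

lemma dCB_ge: "comp C \<Longrightarrow> x \<in> C \<union> B \<Longrightarrow> y \<in> C \<union> B \<Longrightarrow> d x y \<le> gdist (C \<union> B) E x y"
  by (rule gdist_mono[OF reachCB CBV])

lemma dCB_up:
  assumes "comp C" "x \<in> C \<union> B" "y \<in> C \<union> B"
  shows "gdist (C \<union> B) E x y \<le> r x + r y + k"
proof -
  obtain p q where p: "p \<in> B" "d x p = r x" and q: "q \<in> B" "d y q = r y" using r_ex by blast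
  have pq: "p \<in> C \<union> B" "q \<in> C \<union> B" using p q by auto
  note R = reachCB[OF assms(1)]
  have "gdist (C \<union> B) E x y \<le> gdist (C \<union> B) E x p + gdist (C \<union> B) E p y"
    by (rule gdist_tri[OF R[OF assms(2) pq(1)] R[OF pq(1) assms(3)]])
  also have "gdist (C \<union> B) E p y \<le> gdist (C \<union> B) E p q + gdist (C \<union> B) E q y"
    by (rule gdist_tri[OF R[OF pq(1) pq(2)] R[OF pq(2) assms(3)]])
  also have "gdist (C \<union> B) E q y = gdist (C \<union> B) E y q"
    by (rule gdist_sym[OF R[OF assms(3) pq(2)] symE])
  also have "gdist (C \<union> B) E y q = r y" using K5[OF assms(1) assms(3) q] by blast
  also have "gdist (C \<union> B) E x p = r x" using K5[OF assms(1) assms(2) p] by blast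
  also have "gdist (C \<union> B) E p q \<le> gdist B E p q"
  proof -
    have "reachable_in B E p q" using connB p q by (simp add: connected_in_def)
    then show ?thesis by (rule gdist_mono) blast
  qed
  finally show ?thesis using dB_k[OF p(1) q(1)] by linarith
qed

lemma dCB_le:
  assumes "comp C" "x \<in> C \<union> B" "y \<in> C \<union> B"
  shows "gdist (C \<union> B) E x y \<le> d x y + k"
proof -
  have "gdist (C \<union> B) E x y = d x y \<or> r x + r y \<le> d x y" by (rule Lstar[OF assms])
  moreover have "gdist (C \<union> B) E x y \<le> r x + r y + k" by (rule dCB_up[OF assms])
  ultimately show ?thesis by linarith
qed

end



context sg begin

lemma reach_in: "reachable_in S E' u v \<Longrightarrow> u \<in> S \<and> v \<in> S"
  unfolding reachable_in_def walk_in_def by (metis hd_in_set last_in_set subsetD)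

lemma upR: "x \<in> V \<Longrightarrow> y \<in> V \<Longrightarrow> real (d x y) \<le> real (r x) + real (r y) + real k"
  using dupper by (metis of_nat_add of_nat_le_iff)

lemma sepR: assumes "x \<in> V" "y \<in> V" "\<not> ns x y"
  shows "real (r x) + real (r y) \<le> real (d x y) \<and> real (r x) + real (r y) \<le> real (d y x)"
  using sepd[OF assms] dsym[OF assms(1,2)] by (metis of_nat_add of_nat_le_iff)

lemma Tlem:
  assumes C: "comp C" and xyz: "x \<in> C \<union> B" "y \<in> C \<union> B" "z \<in> C \<union> B"
    and F: "four_point_cond (C \<union> B) E \<delta>'"
  shows "real (d x y) + real (r z) \<le> real (d x z) + real (r y) + real k + 2*\<delta>' \<or>
         real (d x y) + real (r z) \<le> real (d y z) + real (r x) + real k + 2*\<delta>'"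
proof -
  have V: "x \<in> V" "y \<in> V" "z \<in> V" using xyz CBV[OF C] by auto
  have d0: "0 \<le> \<delta>'" using F by (simp add: four_point_cond_def)
  have dxy: "real (d x y) \<le> real (r x) + real (r y) + real k" using upR V by blast
  consider (a) "r x + r z \<le> d x z" | (b) "r y + r z \<le> d y z"
    | (c) "\<not> r x + r z \<le> d x z" "\<not> r y + r z \<le> d y z" by blast
  then show ?thesis
  proof cases
    case a
    then have "real (r x) + real (r z) \<le> real (d x z)" by (metis of_nat_add of_nat_le_iff)
    then show ?thesis using dxy d0 by linarith
  next
    case b
    then have "real (r y) + real (r z) \<le> real (d y z)" by (metis of_nat_add of_nat_le_iff)
    then show ?thesis using dxy d0 by linarith
  next
    case c
    have e1: "gdist (C \<union> B) E x z = d x z" using Lstar[OF C xyz(1) xyz(3)] c by blast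
    have e2: "gdist (C \<union> B) E y z = d y z" using Lstar[OF C xyz(2) xyz(3)] c by blast
    obtain p where p: "p \<in> B" "d z p = r z" using r_ex by blast
    have pC: "p \<in> C \<union> B" using p by blast
    have e3: "gdist (C \<union> B) E z p = r z" using K5[OF C xyz(3) p] by blast
    have u1: "gdist (C \<union> B) E y p \<le> r y + k" using dCB_up[OF C xyz(2) pC] r_B[OF p(1)] by simp
    have u2: "gdist (C \<union> B) E x p \<le> r x + k" using dCB_up[OF C xyz(1) pC] r_B[OF p(1)] by simp
    have g: "d x y \<le> gdist (C \<union> B) E x y" by (rule dCB_ge[OF C xyz(1,2)])
    have "real (gdist (C \<union> B) E x y) + real (gdist (C \<union> B) E z p)
       \<le> max (real (gdist (C \<union> B) E x z) + real (gdist (C \<union> B) E y p))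
              (real (gdist (C \<union> B) E x p) + real (gdist (C \<union> B) E y z)) + 2 * \<delta>'"
      using F xyz pC unfolding four_point_cond_def by blast
    moreover have "real (gdist (C \<union> B) E y p) \<le> real (r y) + real k" using u1 by (metis of_nat_add of_nat_le_iff)
    moreover have "real (gdist (C \<union> B) E x p) \<le> real (r x) + real k" using u2 by (metis of_nat_add of_nat_le_iff)
    moreover have "real (d x y) \<le> real (gdist (C \<union> B) E x y)" using g by simp
    ultimately show ?thesis unfolding e1 e2 e3 by (simp add: max_def split: if_splits; linarith)
  qed
qed

lemma caseA:
  assumes C: "comp C" and ab: "a \<in> C \<union> B" "b \<in> C \<union> B" "c \<in> C \<union> B" "e \<in> C \<union> B"
    and F: "four_point_cond (C \<union> B) E \<delta>'"
  shows "real (d a b) + real (d c e) \<le> max (real (d a c) + real (d b e)) (real (d a e) + real (d b c)) + 2 * (real k + \<delta>')"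
proof -
  let ?g = "gdist (C \<union> B) E"
  have L: "real (d x y) \<le> real (?g x y) \<and> real (?g x y) \<le> real (d x y) + real k"
    if "x \<in> C \<union> B" "y \<in> C \<union> B" for x y
    using dCB_ge[OF C that] dCB_le[OF C that] by (metis of_nat_add of_nat_le_iff)
  define M' where "M' = real (?g a c) + real (?g b e)"
  define L' where "L' = real (?g a e) + real (?g b c)"
  define M where "M = real (d a c) + real (d b e)"
  define L where "L = real (d a e) + real (d b c)"
  have 1: "real (?g a b) + real (?g c e) \<le> max M' L' + 2 * \<delta>'"
    using F ab unfolding four_point_cond_def M'_def L'_def by blast
  have 2: "real (d a b) + real (d c e) \<le> real (?g a b) + real (?g c e)"
    using L[OF ab(1,2)] L[OF ab(3,4)] by linarith
  have 3: "M' \<le> M + 2 * real k" using L[OF ab(1,3)] L[OF ab(2,4)] unfolding M'_def M_def by linarith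
  have 4: "L' \<le> L + 2 * real k" using L[OF ab(1,4)] L[OF ab(2,3)] unfolding L'_def L_def by linarith
  have 5: "max M' L' \<le> max (M + 2 * real k) (L + 2 * real k)" using 3 4 by (rule max.mono)
  have 6: "max (M + 2 * real k) (L + 2 * real k) = max M L + 2 * real k" by (simp add: max_def)
  have 7: "real (d a b) + real (d c e) \<le> max M L + 2 * real k + 2 * \<delta>'" using 1 2 5 6 by linarith
  then show ?thesis unfolding M_def L_def by (simp add: algebra_simps)
qed

lemma Cof_comp: assumes "x \<in> V - B" shows "comp (Cof x) \<and> x \<in> Cof x"
proof -
  have xin: "x \<in> Cof x" using assms reach_refl[of x "V - B" E] by (auto simp: Cof_def)
  have cl: "v \<in> Cof x" if "u \<in> Cof x" "v \<in> V - B" "reachable_in (V - B) E u v" for u v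
    using that reach_trans by (auto simp: Cof_def)
  have con: "reachable_in (Cof x) E u v" if "u \<in> Cof x" "v \<in> Cof x" for u v
  proof -
    have xu: "reachable_in (V - B) E x u" and xv: "reachable_in (V - B) E x v" using that by (auto simp: Cof_def)
    have "reachable_in (V - B) E u v" using reach_trans[OF reach_sym[OF xu symE] xv] .
    then obtain ws where ws: "walk_in (V - B) E ws" "hd ws = u" "last ws = v" by (auto simp: reachable_in_def)
    have "set ws \<subseteq> Cof x"
    proof
      fix w assume "w \<in> set ws"
      then obtain i where i: "i < length ws" "ws ! i = w" by (auto simp: in_set_conv_nth)
      have uw: "reachable_in (V - B) E u w" using reach_nth[OF ws(1) i(1)] ws(2) i(2) by simp
      moreover have "w \<in> V - B" using reach_in[OF uw] by blast
      ultimately show "w \<in> Cof x" using cl[OF that(1)] by blast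
    qed
    then show ?thesis using walk_mono ws unfolding reachable_in_def by blast
  qed
  have "Cof x \<subseteq> V - B" by (auto simp: Cof_def)
  then show ?thesis using xin cl con unfolding component_of_def connected_in_def by blast
qed

lemma ns_sym: "ns x y \<Longrightarrow> ns y x"
  unfolding ns_def using reach_sym[of "V - B" E x y, OF _ symE] by blast
lemma ns_trans: "ns x y \<Longrightarrow> ns y z \<Longrightarrow> ns x z"
  unfolding ns_def using reach_trans[of "V - B" E x y z] by blast
lemma ns_V: "ns x y \<Longrightarrow> x \<in> V - B \<and> y \<in> V - B"
  unfolding ns_def using reach_in[of "V - B" E x y] by blast
lemma ns_C: "ns x y \<Longrightarrow> x \<in> Cof x \<and> y \<in> Cof x"
  using ns_V[of x y] reach_refl[of x "V - B" E] unfolding Cof_def ns_def by blast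

lemma sepC:
  assumes "comp C" "t \<in> C \<union> B" "w \<in> V" "w \<notin> C \<union> B"
  shows "\<not> ns w t"
proof
  assume h: "ns w t"
  then have "t \<in> C" using assms(2) by (auto simp: ns_def)
  moreover have "reachable_in (V - B) E t w" using ns_sym[OF h] by (simp add: ns_def)
  moreover have "w \<in> V - B" using ns_V[OF h] by blast
  ultimately have "w \<in> C" using assms(1) by (auto simp: component_of_def)
  then show False using assms(4) by blast
qed

end



context sg begin

lemma quad:
  assumes FC: "\<And>C. comp C \<Longrightarrow> four_point_cond (C \<union> B) E \<delta>" and d0: "0 \<le> \<delta>"
    and V: "a \<in> V" "b \<in> V" "c \<in> V" "e \<in> V"
  shows "real (d a b) + real (d c e) \<le> max (real (d a c) + real (d b e)) (real (d a e) + real (d b c)) + 2 * (real k + \<delta>)"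
proof (cases "\<exists>C. comp C \<and> a \<in> C \<union> B \<and> b \<in> C \<union> B \<and> c \<in> C \<union> B \<and> e \<in> C \<union> B")
  case True
  then obtain C where C: "comp C" and in4: "a \<in> C \<union> B" "b \<in> C \<union> B" "c \<in> C \<union> B" "e \<in> C \<union> B" by blast
  show ?thesis by (rule caseA[OF C in4 FC[OF C]])
next
  case False
  have uab: "real (d a b) \<le> real (r a) + real (r b) + real k" using upR V by simp
  have uce: "real (d c e) \<le> real (r c) + real (r e) + real k" using upR V by simp
  consider (m) "\<not> ns a c \<and> \<not> ns b e" | (l) "\<not> ns a e \<and> \<not> ns b c" | (s1) "ns a c \<and> ns a e"
    | (s2) "ns a c \<and> ns b c" | (s3) "ns b e \<and> ns a e" | (s4) "ns b e \<and> ns b c" by blast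
  then show ?thesis
  proof cases
    case m
    then have "real (r a) + real (r c) \<le> real (d a c)" "real (r b) + real (r e) \<le> real (d b e)"
      using sepR[OF V(1) V(3)] sepR[OF V(2) V(4)] by auto
    then show ?thesis using uab uce d0 by (smt (verit))
  next
    case l
    then have "real (r a) + real (r e) \<le> real (d a e)" "real (r b) + real (r c) \<le> real (d b c)"
      using sepR[OF V(1) V(4)] sepR[OF V(2) V(3)] by auto
    then show ?thesis using uab uce d0 by (smt (verit))
  next
    case s1
    define C where "C = Cof a"
    have C: "comp C" using Cof_comp ns_V[of a c] s1 unfolding C_def by blast
    have in3: "a \<in> C \<union> B" "c \<in> C \<union> B" "e \<in> C \<union> B" using ns_C[of a c] ns_C[of a e] s1 unfolding C_def by blast+
    have nb: "b \<notin> C \<union> B" using False C in3 V by blast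
    have "real (r b) + real (r a) \<le> real (d a b)" "real (r b) + real (r c) \<le> real (d b c)"
         "real (r b) + real (r e) \<le> real (d b e)"
      using sepR[OF V(2) V(1) sepC[OF C in3(1) V(2) nb]] sepR[OF V(2) V(3) sepC[OF C in3(2) V(2) nb]]
        sepR[OF V(2) V(4) sepC[OF C in3(3) V(2) nb]] by linarith+
    moreover have "real (d c a) = real (d a c)" "real (d e a) = real (d a e)" using dsym V by simp_all
    moreover have T: "real (d c e) + real (r a) \<le> real (d c a) + real (r e) + real k + 2*\<delta> \<or>
         real (d c e) + real (r a) \<le> real (d e a) + real (r c) + real k + 2*\<delta>"
      using Tlem[OF C in3(2) in3(3) in3(1) FC[OF C]] .
    ultimately show ?thesis using uab uce d0 by (smt (verit))
  next
    case s2
    define C where "C = Cof a"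
    have C: "comp C" using Cof_comp ns_V[of a c] s2 unfolding C_def by blast
    have "ns a b" using ns_trans[of a c b] ns_sym[of b c] s2 by blast
    then have in3: "a \<in> C \<union> B" "b \<in> C \<union> B" "c \<in> C \<union> B" using ns_C[of a c] ns_C[of a b] s2 unfolding C_def by blast+
    have nb: "e \<notin> C \<union> B" using False C in3 by blast
    have "real (r e) + real (r a) \<le> real (d a e)" "real (r e) + real (r c) \<le> real (d c e)"
         "real (r e) + real (r b) \<le> real (d b e)"
      using sepR[OF V(4) V(1) sepC[OF C in3(1) V(4) nb]] sepR[OF V(4) V(3) sepC[OF C in3(3) V(4) nb]]
        sepR[OF V(4) V(2) sepC[OF C in3(2) V(4) nb]] by linarith+
    moreover have T: "real (d a b) + real (r c) \<le> real (d a c) + real (r b) + real k + 2*\<delta> \<or>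
         real (d a b) + real (r c) \<le> real (d b c) + real (r a) + real k + 2*\<delta>"
      using Tlem[OF C in3(1) in3(2) in3(3) FC[OF C]] .
    ultimately show ?thesis using uab uce d0 by (smt (verit))
  next
    case s3
    define C where "C = Cof a"
    have C: "comp C" using Cof_comp ns_V[of a e] s3 unfolding C_def by blast
    have "ns a b" using ns_trans[of a e b] ns_sym[of b e] s3 by blast
    then have in3: "a \<in> C \<union> B" "b \<in> C \<union> B" "e \<in> C \<union> B" using ns_C[of a e] ns_C[of a b] s3 unfolding C_def by blast+
    have nb: "c \<notin> C \<union> B" using False C in3 by blast
    have "real (r c) + real (r a) \<le> real (d a c)" "real (r c) + real (r b) \<le> real (d b c)"
         "real (r c) + real (r e) \<le> real (d c e)"
      using sepR[OF V(3) V(1) sepC[OF C in3(1) V(3) nb]] sepR[OF V(3) V(2) sepC[OF C in3(2) V(3) nb]]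
        sepR[OF V(3) V(4) sepC[OF C in3(3) V(3) nb]] by linarith+
    moreover have T: "real (d a b) + real (r e) \<le> real (d a e) + real (r b) + real k + 2*\<delta> \<or>
         real (d a b) + real (r e) \<le> real (d b e) + real (r a) + real k + 2*\<delta>"
      using Tlem[OF C in3(1) in3(2) in3(3) FC[OF C]] .
    ultimately show ?thesis using uab uce d0 by (smt (verit))
  next
    case s4
    define C where "C = Cof b"
    have C: "comp C" using Cof_comp ns_V[of b e] s4 unfolding C_def by blast
    have in3: "b \<in> C \<union> B" "c \<in> C \<union> B" "e \<in> C \<union> B" using ns_C[of b e] ns_C[of b c] s4 unfolding C_def by blast+
    have nb: "a \<notin> C \<union> B" using False C in3 by blast
    have "real (r a) + real (r b) \<le> real (d a b)" "real (r a) + real (r c) \<le> real (d a c)"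
         "real (r a) + real (r e) \<le> real (d a e)"
      using sepR[OF V(1) V(2) sepC[OF C in3(1) V(1) nb]] sepR[OF V(1) V(3) sepC[OF C in3(2) V(1) nb]]
        sepR[OF V(1) V(4) sepC[OF C in3(3) V(1) nb]] by linarith+
    moreover have "real (d c b) = real (d b c)" "real (d e b) = real (d b e)" using dsym V by simp_all
    moreover have T: "real (d c e) + real (r b) \<le> real (d c b) + real (r e) + real k + 2*\<delta> \<or>
         real (d c e) + real (r b) \<le> real (d e b) + real (r c) + real k + 2*\<delta>"
      using Tlem[OF C in3(2) in3(3) in3(1) FC[OF C]] .
    ultimately show ?thesis using uab uce d0 by (smt (verit))
  qed
qed

lemma main:
  assumes "V - B \<noteq> {}"
  shows "hyp_curv V E \<le> real k + Max {hyp_curv (C \<union> B) E | C. comp C}"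
proof -
  let ?H = "{hyp_curv (C \<union> B) E | C. comp C}"
  define \<delta> where "\<delta> = Max ?H"
  have "{C. comp C} \<subseteq> Pow V" using compV by auto
  then have "finite {C. comp C}" using finV by (meson finite_Pow_iff finite_subset)
  moreover have "?H = (\<lambda>C. hyp_curv (C \<union> B) E) ` {C. comp C}" by (simp add: setcompr_eq_image)
  ultimately have finH: "finite ?H" by simp
  have FC: "four_point_cond (C \<union> B) E \<delta>" if C: "comp C" for C
  proof -
    have "finite (C \<union> B)" using CBV[OF C] finV by (rule finite_subset)
    then have h: "four_point_cond (C \<union> B) E (hyp_curv (C \<union> B) E)" using hyp_curv_props by blast
    have mem: "hyp_curv (C \<union> B) E \<in> ?H" using C by blast
    have "hyp_curv (C \<union> B) E \<le> \<delta>" unfolding \<delta>_def by (rule Max_ge[OF finH mem])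
    then show ?thesis by (rule fpc_mono[OF h])
  qed
  obtain x0 where "x0 \<in> V - B" using assms by blast
  then have cx: "comp (Cof x0)" using Cof_comp by blast
  have d0: "0 \<le> \<delta>" using FC[OF cx] unfolding four_point_cond_def by blast
  have Q: "\<And>a b c e. a \<in> V \<Longrightarrow> b \<in> V \<Longrightarrow> c \<in> V \<Longrightarrow> e \<in> V \<Longrightarrow>
    real (d a b) + real (d c e) \<le> max (real (d a c) + real (d b e)) (real (d a e) + real (d b c)) + 2 * (real k + \<delta>)"
    by (rule quad[OF FC d0])
  have "four_point_cond V E (real k + \<delta>)"
    unfolding four_point_cond_def using d0 Q by simp
  then show ?thesis using conjunct2[OF hyp_curv_props[OF finV]] unfolding \<delta>_def by blast
qed

end

theorem mainTheorem4:
  fixes V B :: "'a set" and E :: "'a \<Rightarrow> 'a \<Rightarrow> bool" and k :: nat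
  assumes "finite V"
    and "\<And>u v. E u v \<Longrightarrow> E v u"
    and "\<And>u. \<not> E u u"
    and "\<And>u v. E u v \<Longrightarrow> u \<in> V \<and> v \<in> V"
    and "connected_in V E"
    and "B \<subseteq> V"
    and "\<not> connected_in (V - B) E"
    and "V - B \<noteq> {}"
    and "connected_in B E"
    and "diameter B E = k"
  shows "hyp_curv V E \<le> real k + Max {hyp_curv (C \<union> B) E | C. component_of (V - B) E C}"
proof -
  interpret sg V B E k
    using assms(1,2,5,6,9,10) by unfold_locales
  show ?thesis by (rule main[OF assms(8)])
qed

end
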